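(* Let $(G,o)$ be a strong orientation of a cubic graph $G$. Let $e_1=u_1v_1$ and $e_2=u_2v_2$ be two non-adjacent edges of $G$ oriented $u_1\to v_1$ and $u_2\to v_2$ in $(G,o)$, and assume both $e_1$ and $e_2$ are deletable in $(G,o)$. Let $G'$ be the cubic graph obtained from $G$ by subdividing $e_1$ with a new vertex $x_1$, subdividing $e_2$ with a new vertex $x_2$, and adding the edge $x_1x_2$. Let $(G',o')$ be the orientation of $G'$ with $u_1\to x_1$, $x_1\to v_1$, $x_1\to x_2$, $u_2\to x_2$, $x_2\to v_2$, and $o'(e)=o(e)$ for every other edge $e$ of $G'$. Then $(G',o')$ is a strong orientation and $$D(G',o')\supseteq \bigl(D(G,o)\setminus\{e_1,e_2\}\bigr)\cup\{x_1v_1,\;x_1x_2,\;u_2x_2\}.$$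
   Context: An orientation is strong if for every ordered pair of distinct vertices $u,v$ there is a directed $uv$-path. An edge $e$ is deletable in an orientation $(G,o)$ if the restriction of $o$ to $E(G)\setminus\{e\}$ is a strong orientation of $G-e$. $D(G,o)$ denotes the set of edges deletable in $(G,o)$. *)

theory Defs
  imports Main
begin

definition simple_graph :: "'a set \<Rightarrow> 'a set set \<Rightarrow> bool" where
  "simple_graph V E \<longleftrightarrow> finite V \<and> (\<forall>e\<in>E. \<exists>u v. u \<in> V \<and> v \<in> V \<and> u \<noteq> v \<and> e = {u, v})"

definition degree :: "'a set set \<Rightarrow> 'a \<Rightarrow> nat" where
  "degree E v = card {e \<in> E. v \<in> e}"

definition cubic_graph :: "'a set \<Rightarrow> 'a set set \<Rightarrow> bool" where
  "cubic_graph V E \<longleftrightarrow> simple_graph V E \<and> (\<forall>v\<in>V. degree E v = 3)"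

definition orientation :: "'a set \<Rightarrow> 'a set set \<Rightarrow> ('a \<times> 'a) set \<Rightarrow> bool" where
  "orientation V E A \<longleftrightarrow> A \<subseteq> V \<times> V \<and> (\<forall>(u, v)\<in>A. {u, v} \<in> E)
     \<and> (\<forall>e\<in>E. \<exists>!p. p \<in> A \<and> {fst p, snd p} = e)"

definition strong_orientation :: "'a set \<Rightarrow> 'a set set \<Rightarrow> ('a \<times> 'a) set \<Rightarrow> bool" where
  "strong_orientation V E A \<longleftrightarrow> orientation V E A
     \<and> (\<forall>u\<in>V. \<forall>v\<in>V. u \<noteq> v \<longrightarrow> (u, v) \<in> A\<^sup>+)"

definition restrict_orient :: "('a \<times> 'a) set \<Rightarrow> 'a set \<Rightarrow> ('a \<times> 'a) set" where
  "restrict_orient A e = {(u, v) \<in> A. {u, v} \<noteq> e}"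

definition deletable :: "'a set \<Rightarrow> 'a set set \<Rightarrow> ('a \<times> 'a) set \<Rightarrow> 'a set \<Rightarrow> bool" where
  "deletable V E A e \<longleftrightarrow> e \<in> E \<and> strong_orientation V (E - {e}) (restrict_orient A e)"

definition deletable_set :: "'a set \<Rightarrow> 'a set set \<Rightarrow> ('a \<times> 'a) set \<Rightarrow> 'a set set" where
  "deletable_set V E A = {e \<in> E. deletable V E A e}"

end

theory Submission
  imports Defs
begin

lemma trancl_sub: "R \<subseteq> S\<^sup>+ \<Longrightarrow> R\<^sup>+ \<subseteq> S\<^sup>+"
  by (metis trancl_id trancl_mono trans_trancl subrelI)

lemma strong_transfer:
  assumes old: "\<forall>u\<in>V. \<forall>v\<in>V. u \<noteq> v \<longrightarrow> (u,v) \<in> B\<^sup>+" and sub: "B \<subseteq> S\<^sup>+"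
    and inx: "\<forall>x\<in>X. \<exists>a\<in>V. (a,x) \<in> S\<^sup>+" and outx: "\<forall>x\<in>X. \<exists>b\<in>V. (x,b) \<in> S\<^sup>+"
  shows "\<forall>u\<in>V\<union>X. \<forall>v\<in>V\<union>X. u \<noteq> v \<longrightarrow> (u,v) \<in> S\<^sup>+"
proof -
  have VV: "(u,v) \<in> S\<^sup>*" if "u \<in> V" "v \<in> V" for u v
  proof (cases "u = v")
    case False
    then have "(u,v) \<in> B\<^sup>+" using old that by blast
    then show ?thesis using trancl_sub[OF sub] by (meson subsetD trancl_into_rtrancl)
  qed simp
  have out: "\<exists>b\<in>V. (u,b) \<in> S\<^sup>*" if "u \<in> V \<union> X" for u
    using that outx by (metis Un_iff rtrancl.rtrancl_refl trancl_into_rtrancl)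
  have inn: "\<exists>a\<in>V. (a,v) \<in> S\<^sup>*" if "v \<in> V \<union> X" for v
    using that inx by (metis Un_iff rtrancl.rtrancl_refl trancl_into_rtrancl)
  show ?thesis
  proof (intro ballI impI)
    fix u v assume u: "u \<in> V \<union> X" and v: "v \<in> V \<union> X" and uv: "u \<noteq> v"
    show "(u,v) \<in> S\<^sup>+"
    proof (cases "u \<in> V \<and> v \<in> V")
      case True
      then have "(u,v) \<in> B\<^sup>+" using old uv by blast
      then show ?thesis using trancl_sub[OF sub] by blast
    next
      case False
      then consider "u \<in> X" | "v \<in> X" using u v by blast
      then show ?thesis
      proof cases
        case 1
        then obtain b where b: "b \<in> V" "(u,b) \<in> S\<^sup>+" using outx by blast
        obtain a where a: "a \<in> V" "(a,v) \<in> S\<^sup>*" using inn v by blast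
        have "(b,a) \<in> S\<^sup>*" using VV a b by blast
        then show ?thesis using b a by (meson rtrancl_trans trancl_rtrancl_trancl)
      next
        case 2
        then obtain a where a: "a \<in> V" "(a,v) \<in> S\<^sup>+" using inx by blast
        obtain b where b: "b \<in> V" "(u,b) \<in> S\<^sup>*" using out u by blast
        have "(b,a) \<in> S\<^sup>*" using VV a b by blast
        then show ?thesis using b a by (meson rtrancl_trans rtrancl_trancl_trancl)
      qed
    qed
  qed
qed

lemma ex1_eq: "\<exists>!x. P x \<Longrightarrow> P a \<Longrightarrow> P b \<Longrightarrow> a = b"
  by blast

lemma Un_notin: "x \<in> A \<union> B \<Longrightarrow> x \<notin> A \<Longrightarrow> x \<in> B"
  by blast

lemma path2: "(a,x) \<in> S \<Longrightarrow> (x,b) \<in> S \<Longrightarrow> (a,b) \<in> S\<^sup>+"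
  by (meson r_into_trancl trancl_into_trancl)

lemma path3: "(a,x) \<in> S \<Longrightarrow> (x,y) \<in> S \<Longrightarrow> (y,b) \<in> S \<Longrightarrow> (a,b) \<in> S\<^sup>+"
  by (meson r_into_trancl trancl_into_trancl)

lemma orient_restrict:
  "orientation V E A \<Longrightarrow> orientation V (E - {e}) (restrict_orient A e)"
proof -
  assume or: "orientation V E A"
  have AV: "A \<subseteq> V \<times> V" and AE: "\<forall>(u, v)\<in>A. {u, v} \<in> E"
    and AU: "\<forall>e\<in>E. \<exists>!p. p \<in> A \<and> {fst p, snd p} = e"
    using or unfolding orientation_def apply -
    apply (erule conjE, assumption)
    apply (erule conjE, erule conjE, assumption)
    apply (erule conjE, erule conjE, assumption)
    done
  have U: "\<forall>e'\<in>E-{e}. \<exists>!p. p \<in> restrict_orient A e \<and> {fst p, snd p} = e'"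
  proof
    fix e' assume e': "e' \<in> E - {e}"
    obtain p where p: "p \<in> A \<and> {fst p, snd p} = e'" and pu: "\<forall>q. q \<in> A \<and> {fst q, snd q} = e' \<longrightarrow> q = p"
      by (rule ex1E[OF bspec[OF AU DiffD1[OF e']]])
    show "\<exists>!p. p \<in> restrict_orient A e \<and> {fst p, snd p} = e'"
    proof (rule ex1I[of _ p])
      show "p \<in> restrict_orient A e \<and> {fst p, snd p} = e'"
        using p e' unfolding restrict_orient_def by (cases p) auto
      fix q assume q: "q \<in> restrict_orient A e \<and> {fst q, snd q} = e'"
      then have "q \<in> A" unfolding restrict_orient_def by (cases q) auto
      then show "q = p" using pu q by blast
    qed
  qed
  have S1: "restrict_orient A e \<subseteq> V \<times> V" using AV unfolding restrict_orient_def by auto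
  have S2: "\<forall>(u, v)\<in>restrict_orient A e. {u, v} \<in> E - {e}" using AE unfolding restrict_orient_def by auto
  show ?thesis unfolding orientation_def by (rule conjI[OF S1 conjI[OF S2 U]])
qed

theorem mainTheorem7:
  fixes V :: "'a set" and E :: "'a set set" and A :: "('a \<times> 'a) set"
    and u1 v1 u2 v2 x1 x2 :: 'a
  assumes cubic: "cubic_graph V E"
    and strong: "strong_orientation V E A"
    and e1: "{u1, v1} \<in> E" and e2: "{u2, v2} \<in> E"
    and nonadj: "{u1, v1} \<inter> {u2, v2} = {}"
    and o1: "(u1, v1) \<in> A" and o2: "(u2, v2) \<in> A"
    and del1: "deletable V E A {u1, v1}" and del2: "deletable V E A {u2, v2}"
    and new: "x1 \<notin> V" "x2 \<notin> V" "x1 \<noteq> x2"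
  shows "strong_orientation (V \<union> {x1, x2})
           ((E - {{u1, v1}, {u2, v2}}) \<union> {{u1, x1}, {x1, v1}, {x1, x2}, {u2, x2}, {x2, v2}})
           ((A - {(u1, v1), (u2, v2)}) \<union> {(u1, x1), (x1, v1), (x1, x2), (u2, x2), (x2, v2)})
       \<and> (deletable_set V E A - {{u1, v1}, {u2, v2}}) \<union> {{x1, v1}, {x1, x2}, {u2, x2}}
           \<subseteq> deletable_set (V \<union> {x1, x2})
               ((E - {{u1, v1}, {u2, v2}}) \<union> {{u1, x1}, {x1, v1}, {x1, x2}, {u2, x2}, {x2, v2}})
               ((A - {(u1, v1), (u2, v2)}) \<union> {(u1, x1), (x1, v1), (x1, x2), (u2, x2), (x2, v2)})"
proof -
  define V' where "V' = V \<union> {x1, x2}"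
  define E' where "E' = (E - {{u1, v1}, {u2, v2}}) \<union> {{u1, x1}, {x1, v1}, {x1, x2}, {u2, x2}, {x2, v2}}"
  define A' where "A' = (A - {(u1, v1), (u2, v2)}) \<union> {(u1, x1), (x1, v1), (x1, x2), (u2, x2), (x2, v2)}"
  have or: "orientation V E A" using strong unfolding strong_orientation_def by blast
  have AV: "A \<subseteq> V \<times> V" and AE: "\<forall>(u, v)\<in>A. {u, v} \<in> E"
    and AU: "\<forall>e\<in>E. \<exists>!p. p \<in> A \<and> {fst p, snd p} = e"
    using or unfolding orientation_def apply -
    apply (erule conjE, assumption)
    apply (erule conjE, erule conjE, assumption)
    apply (erule conjE, erule conjE, assumption)
    done
  have sg: "simple_graph V E" using cubic unfolding cubic_graph_def by blast
  have sg2: "\<forall>e\<in>E. \<exists>u v. u \<in> V \<and> v \<in> V \<and> u \<noteq> v \<and> e = {u, v}"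
    using sg unfolding simple_graph_def by (rule conjunct2)
  have EV: "e \<subseteq> V" if eE0: "e \<in> E" for e
  proof -
    obtain a b where "a \<in> V" "b \<in> V" "e = {a,b}" using bspec[OF sg2 eE0] by blast
    then show ?thesis by simp
  qed
  have u1: "u1 \<in> V" "v1 \<in> V" using o1 AV by auto
  have u2: "u2 \<in> V" "v2 \<in> V" using o2 AV by auto
  have d1: "u1 \<noteq> v1"
  proof -
    obtain a b where "a \<noteq> b" "{u1,v1} = {a,b}" using bspec[OF sg2 e1] by blast
    then show ?thesis by (metis doubleton_eq_iff)
  qed
  have d2: "u2 \<noteq> v2"
  proof -
    obtain a b where "a \<noteq> b" "{u2,v2} = {a,b}" using bspec[OF sg2 e2] by blast
    then show ?thesis by (metis doubleton_eq_iff)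
  qed
  have nr1: "(v1, u1) \<notin> A"
  proof
    assume h: "(v1, u1) \<in> A"
    have ex: "\<exists>!p. p \<in> A \<and> {fst p, snd p} = {u1,v1}" using bspec[OF AU e1] .
    have c1: "{fst (v1,u1), snd (v1,u1)} = {u1,v1}" unfolding fst_conv snd_conv by (rule insert_commute)
    have c2: "{fst (u1,v1), snd (u1,v1)} = {u1,v1}" unfolding fst_conv snd_conv by (rule refl)
    have "(v1,u1) = (u1,v1)" by (rule ex1_eq[OF ex conjI[OF h c1] conjI[OF o1 c2]])
    then show False using d1 by simp
  qed
  have nr2: "(v2, u2) \<notin> A"
  proof
    assume h: "(v2, u2) \<in> A"
    have ex: "\<exists>!p. p \<in> A \<and> {fst p, snd p} = {u2,v2}" using bspec[OF AU e2] .
    have c1: "{fst (v2,u2), snd (v2,u2)} = {u2,v2}" unfolding fst_conv snd_conv by (rule insert_commute)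
    have c2: "{fst (u2,v2), snd (u2,v2)} = {u2,v2}" unfolding fst_conv snd_conv by (rule refl)
    have "(v2,u2) = (u2,v2)" by (rule ex1_eq[OF ex conjI[OF h c1] conjI[OF o2 c2]])
    then show False using d2 by simp
  qed
  have x1u: "x1 \<noteq> u1" "x1 \<noteq> v1" "x1 \<noteq> u2" "x1 \<noteq> v2" "x2 \<noteq> u1" "x2 \<noteq> v1" "x2 \<noteq> u2" "x2 \<noteq> v2"
    using new u1 u2 by auto
  have oldV: "fst p \<in> V \<and> snd p \<in> V" if "p \<in> A" for p using that AV by auto
  have A'V: "A' \<subseteq> V' \<times> V'"
  proof -
    have VV': "V \<times> V \<subseteq> V' \<times> V'" unfolding V'_def by blast
    have a: "A - {(u1, v1), (u2, v2)} \<subseteq> V' \<times> V'" using AV VV' by blast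
    have b: "{(u1, x1), (x1, v1), (x1, x2), (u2, x2), (x2, v2)} \<subseteq> V' \<times> V'"
      unfolding V'_def using u1 u2 by simp
    show ?thesis unfolding A'_def using a b by (rule Un_least)
  qed
  define N where "N = {(u1, x1), (x1, v1), (x1, x2), (u2, x2), (x2, v2)}"
  define NE where "NE = {{u1, x1}, {x1, v1}, {x1, x2}, {u2, x2}, {x2, v2}}"
  have A'eq: "A' = (A - {(u1, v1), (u2, v2)}) \<union> N" unfolding A'_def N_def ..
  have E'eq: "E' = (E - {{u1, v1}, {u2, v2}}) \<union> NE" unfolding E'_def NE_def ..
  have nx: "x1 \<notin> V" "x2 \<notin> V" "x1 \<noteq> x2" using new by auto
  have nadj: "u1 \<noteq> u2" "u1 \<noteq> v2" "v1 \<noteq> u2" "v1 \<noteq> v2" using nonadj by auto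
  have A'new: "(u1,x1) \<in> A'" "(x1,v1) \<in> A'" "(x1,x2) \<in> A'" "(u2,x2) \<in> A'" "(x2,v2) \<in> A'"
    unfolding A'eq N_def
    by (simp_all only: insert_iff Un_iff simp_thms)
  have E'new: "{u1,x1} \<in> E'" "{x1,v1} \<in> E'" "{x1,x2} \<in> E'" "{u2,x2} \<in> E'" "{x2,v2} \<in> E'"
    unfolding E'eq NE_def
    by (simp_all only: insert_iff Un_iff simp_thms)
  have A'old: "(a,b) \<in> A'" if "(a,b) \<in> A" "(a,b) \<noteq> (u1,v1)" "(a,b) \<noteq> (u2,v2)" for a b
    unfolding A'eq using that by (intro UnI1 DiffI) simp_all
  have Ncases: "q = (u1,x1) \<or> q = (x1,v1) \<or> q = (x1,x2) \<or> q = (u2,x2) \<or> q = (x2,v2)" if "q \<in> N" for q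
    using that unfolding N_def by simp
  have NEcases: "e = {u1,x1} \<or> e = {x1,v1} \<or> e = {x1,x2} \<or> e = {u2,x2} \<or> e = {x2,v2}" if "e \<in> NE" for e
    using that unfolding NE_def by simp
  have NnotA: "q \<notin> A" if "q \<in> N" for q
  proof
    assume qA: "q \<in> A"
    have "fst q \<in> V" "snd q \<in> V" using oldV[OF qA] by auto
    then show False using Ncases[OF that] nx by auto
  qed
  have NEx: "x1 \<in> e \<or> x2 \<in> e" if "e \<in> NE" for e
    using NEcases[OF that] by auto
  have A'cases: "q \<in> A - {(u1, v1), (u2, v2)} \<or> q \<in> N" if "q \<in> A'" for q
    using that unfolding A'eq by (rule UnE) simp_all
  have A'E: "\<forall>(a, b)\<in>A'. {a, b} \<in> E'"
  proof (intro ballI, clarify)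
    fix a b assume ab: "(a,b) \<in> A'"
    show "{a,b} \<in> E'"
    proof (cases "(a,b) \<in> A")
      case True
      then have abE: "{a,b} \<in> E" using AE by blast
      have abN: "(a,b) \<notin> N" using NnotA True by blast
      have n1: "(a,b) \<noteq> (u1,v1)" "(a,b) \<noteq> (u2,v2)" using A'cases[OF ab] abN by auto
      have n2: "(a,b) \<noteq> (v1,u1)" "(a,b) \<noteq> (v2,u2)" using nr1 nr2 True by auto
      have m1: "{a,b} \<noteq> {u1,v1}"
      proof
        assume "{a,b} = {u1,v1}"
        then have "a = u1 \<and> b = v1 \<or> a = v1 \<and> b = u1" by (simp only: doubleton_eq_iff)
        then show False using n1 n2 by auto
      qed
      have m2: "{a,b} \<noteq> {u2,v2}"
      proof
        assume "{a,b} = {u2,v2}"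
        then have "a = u2 \<and> b = v2 \<or> a = v2 \<and> b = u2" by (simp only: doubleton_eq_iff)
        then show False using n1 n2 by auto
      qed
      show ?thesis unfolding E'eq using abE m1 m2 by (intro UnI1 DiffI) simp_all
    next
      case False
      then have "(a,b) \<in> N" using A'cases[OF ab] by blast
      then show ?thesis using Ncases E'new by auto
    qed
  qed
  have A'U: "\<forall>e\<in>E'. \<exists>!p. p \<in> A' \<and> {fst p, snd p} = e"
  proof
    fix e assume eE: "e \<in> E'"
    show "\<exists>!p. p \<in> A' \<and> {fst p, snd p} = e"
    proof (cases "e \<in> E - {{u1, v1}, {u2, v2}}")
      case True
      have ex: "\<exists>!p. p \<in> A \<and> {fst p, snd p} = e" using bspec[OF AU DiffD1[OF True]] .
      obtain p where p: "p \<in> A \<and> {fst p, snd p} = e" and pu: "\<forall>q. q \<in> A \<and> {fst q, snd q} = e \<longrightarrow> q = p"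
        by (rule ex1E[OF ex])
      have eV: "e \<subseteq> V" using EV True by blast
      have pA': "p \<in> A'"
      proof -
        have "p \<noteq> (u1,v1)" "p \<noteq> (u2,v2)" using p True by auto
        then show ?thesis using A'old[of "fst p" "snd p"] p by simp
      qed
      show ?thesis
      proof (rule ex1I[of _ p])
        show "p \<in> A' \<and> {fst p, snd p} = e" using pA' p by blast
        fix q assume q: "q \<in> A' \<and> {fst q, snd q} = e"
        have "q \<in> A"
        proof (rule ccontr)
          assume "q \<notin> A"
          then have "q \<in> N" using A'cases q by blast
          then have "x1 \<in> {fst q, snd q} \<or> x2 \<in> {fst q, snd q}" using Ncases[of q] by auto
          then show False using q eV nx by blast
        qed
        then show "q = p" using pu q by blast
      qed
    next
      case False
      have eN: "e \<in> NE" by (rule Un_notin[OF eE[unfolded E'eq] False])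
      have noA: "q \<notin> A" if "{fst q, snd q} = e" for q
      proof
        assume "q \<in> A"
        then have "e \<subseteq> V" using that oldV[of q] by auto
        then show False using NEx[OF eN] nx by blast
      qed
      have qN: "q \<in> N" if "q \<in> A'" "{fst q, snd q} = e" for q
        using A'cases[OF that(1)] noA[OF that(2)] by blast
      have dd: "u1 \<noteq> x1" "v1 \<noteq> x1" "u2 \<noteq> x2" "v2 \<noteq> x2" "u1 \<noteq> x2" "v1 \<noteq> x2" "u2 \<noteq> x1" "v2 \<noteq> x1"
        using x1u by auto
      have uq: "q = p" if "p \<in> N" "q \<in> N" "{fst p, snd p} = {fst q, snd q}" for p q
        using Ncases[OF that(1)] Ncases[OF that(2)] that(3) dd nx(3) d1 d2
        by (auto simp only: doubleton_eq_iff prod.inject fst_conv snd_conv)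
      have pe: "\<exists>p\<in>N. {fst p, snd p} = e"
        using NEcases[OF eN] unfolding N_def by auto
      then obtain p where p: "p \<in> N" "{fst p, snd p} = e" by blast
      have pA: "p \<in> A'" using p(1) unfolding A'eq by blast
      show ?thesis
      proof (rule ex1I[of _ p])
        show "p \<in> A' \<and> {fst p, snd p} = e" using pA p by blast
        fix q assume q: "q \<in> A' \<and> {fst q, snd q} = e"
        then have qin: "q \<in> N" using qN by blast
        have "{fst p, snd p} = {fst q, snd q}" using p(2) q by simp
        then show "q = p" by (rule uq[OF p(1) qin])
      qed
    qed
  qed
  have orient': "orientation V' E' A'"
    unfolding orientation_def by (rule conjI[OF A'V conjI[OF A'E A'U]])
  have Rmem: "(a,b) \<in> restrict_orient A' e \<longleftrightarrow> (a,b) \<in> A' \<and> {a,b} \<noteq> e" for a b e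
    unfolding restrict_orient_def by simp
  have oldstrong: "\<forall>u\<in>V. \<forall>v\<in>V. u \<noteq> v \<longrightarrow> (u,v) \<in> A\<^sup>+" using strong unfolding strong_orientation_def by blast
  have two: "P x1 \<Longrightarrow> P x2 \<Longrightarrow> \<forall>x\<in>{x1,x2}. P x" for P by simp
  have neqI: "x \<in> s \<Longrightarrow> x \<notin> t \<Longrightarrow> s \<noteq> t" for x :: 'a and s t by blast
  have P1: "strong_orientation V' E' A'"
  proof -
    have sub: "A \<subseteq> A'\<^sup>+"
    proof clarify
      fix a b assume ab: "(a,b) \<in> A"
      show "(a,b) \<in> A'\<^sup>+"
      proof (cases "(a,b) = (u1,v1)")
        case True then show ?thesis using path2[OF A'new(1,2)] by simp
      next
        case F1: False show ?thesis
        proof (cases "(a,b) = (u2,v2)")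
          case True then show ?thesis using path2[OF A'new(4,5)] by simp
        next
          case False then show ?thesis using A'old[OF ab F1] by blast
        qed
      qed
    qed
    have inx: "\<forall>x\<in>{x1,x2}. \<exists>a\<in>V. (a,x) \<in> A'\<^sup>+"
      by (rule two; rule bexI) (rule r_into_trancl, rule A'new(1), rule u1(1), rule r_into_trancl, rule A'new(4), rule u2(1))
    have outx: "\<forall>x\<in>{x1,x2}. \<exists>b\<in>V. (x,b) \<in> A'\<^sup>+"
      by (rule two; rule bexI) (rule r_into_trancl, rule A'new(2), rule u1(2), rule r_into_trancl, rule A'new(5), rule u2(2))
    have c: "\<forall>u\<in>V'. \<forall>v\<in>V'. u \<noteq> v \<longrightarrow> (u,v) \<in> A'\<^sup>+"
      using strong_transfer[OF oldstrong sub inx outx] unfolding V'_def .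
    show ?thesis unfolding strong_orientation_def by (rule conjI[OF orient' c])
  qed
  have delI: "e \<in> deletable_set V' E' A'" if eE: "e \<in> E'"
    and conn: "\<forall>u\<in>V'. \<forall>v\<in>V'. u \<noteq> v \<longrightarrow> (u,v) \<in> (restrict_orient A' e)\<^sup>+" for e
  proof -
    have "strong_orientation V' (E' - {e}) (restrict_orient A' e)"
      unfolding strong_orientation_def by (rule conjI[OF orient_restrict[OF orient'] conn])
    then have "deletable V' E' A' e" unfolding deletable_def using eE by (intro conjI)
    then show ?thesis unfolding deletable_set_def using eE by simp
  qed
  have D1: "e \<in> deletable_set V' E' A'" if eD: "e \<in> deletable_set V E A - {{u1, v1}, {u2, v2}}" for e
  proof -
    have eE: "e \<in> E" and dl: "deletable V E A e" and ne: "e \<noteq> {u1,v1}" "e \<noteq> {u2,v2}"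
      using eD unfolding deletable_set_def by auto
    have eV: "e \<subseteq> V" using EV eE by blast
    have x1e: "x1 \<notin> e" "x2 \<notin> e" using eV nx by auto
    have ns: "{u1,x1} \<noteq> e" "{x1,v1} \<noteq> e" "{x1,x2} \<noteq> e" "{u2,x2} \<noteq> e" "{x2,v2} \<noteq> e"
      using neqI[of x1 "{u1,x1}" e] neqI[of x1 "{x1,v1}" e] neqI[of x1 "{x1,x2}" e]
        neqI[of x2 "{u2,x2}" e] neqI[of x2 "{x2,v2}" e] x1e by simp_all
    define S where "S = restrict_orient A' e"
    have Sn: "(u1,x1) \<in> S" "(x1,v1) \<in> S" "(x1,x2) \<in> S" "(u2,x2) \<in> S" "(x2,v2) \<in> S"
      unfolding S_def Rmem using A'new ns by simp_all
    have old: "\<forall>u\<in>V. \<forall>v\<in>V. u \<noteq> v \<longrightarrow> (u,v) \<in> (restrict_orient A e)\<^sup>+"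
      using dl unfolding deletable_def strong_orientation_def by blast
    have sub: "restrict_orient A e \<subseteq> S\<^sup>+"
    proof clarify
      fix a b assume "(a,b) \<in> restrict_orient A e"
      then have ab: "(a,b) \<in> A" "{a,b} \<noteq> e" unfolding restrict_orient_def by auto
      show "(a,b) \<in> S\<^sup>+"
      proof (cases "(a,b) = (u1,v1)")
        case True then show ?thesis using path2[OF Sn(1,2)] by simp
      next
        case F1: False show ?thesis
        proof (cases "(a,b) = (u2,v2)")
          case True then show ?thesis using path2[OF Sn(4,5)] by simp
        next
          case False then have "(a,b) \<in> S" using A'old[OF ab(1) F1] ab(2) unfolding S_def Rmem by blast
          then show ?thesis by blast
        qed
      qed
    qed
    have inx: "\<forall>x\<in>{x1,x2}. \<exists>a\<in>V. (a,x) \<in> S\<^sup>+"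
      by (rule two; rule bexI) (rule r_into_trancl, rule Sn(1), rule u1(1), rule r_into_trancl, rule Sn(4), rule u2(1))
    have outx: "\<forall>x\<in>{x1,x2}. \<exists>b\<in>V. (x,b) \<in> S\<^sup>+"
      by (rule two; rule bexI) (rule r_into_trancl, rule Sn(2), rule u1(2), rule r_into_trancl, rule Sn(5), rule u2(2))
    have eE': "e \<in> E'" unfolding E'eq using eE ne by (intro UnI1 DiffI) simp_all
    have c: "\<forall>u\<in>V'. \<forall>v\<in>V'. u \<noteq> v \<longrightarrow> (u,v) \<in> (restrict_orient A' e)\<^sup>+"
      using strong_transfer[OF old sub inx outx] unfolding S_def V'_def .
    show ?thesis by (rule delI[OF eE' c])
  qed
  have D2: "{x1,v1} \<in> deletable_set V' E' A'"
  proof -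
    define e where "e = {x1,v1}"
    have ns: "{u1,x1} \<noteq> e" "{x1,x2} \<noteq> e" "{u2,x2} \<noteq> e" "{x2,v2} \<noteq> e"
      using neqI[of u1 "{u1,x1}" e] neqI[of x2 "{x1,x2}" e] neqI[of u2 "{u2,x2}" e] neqI[of x2 "{x2,v2}" e] x1u d1 nx nadj unfolding e_def by simp_all
    define S where "S = restrict_orient A' e"
    have Sn: "(u1,x1) \<in> S" "(x1,x2) \<in> S" "(u2,x2) \<in> S" "(x2,v2) \<in> S"
      unfolding S_def Rmem using A'new ns by simp_all
    have old: "\<forall>u\<in>V. \<forall>v\<in>V. u \<noteq> v \<longrightarrow> (u,v) \<in> (restrict_orient A {u1,v1})\<^sup>+"
      using del1 unfolding deletable_def strong_orientation_def by blast
    have sub: "restrict_orient A {u1,v1} \<subseteq> S\<^sup>+"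
    proof clarify
      fix a b assume "(a,b) \<in> restrict_orient A {u1,v1}"
      then have ab: "(a,b) \<in> A" "{a,b} \<noteq> {u1,v1}" unfolding restrict_orient_def by auto
      have F1: "(a,b) \<noteq> (u1,v1)" using ab by auto
      have ne: "{a,b} \<noteq> e" unfolding e_def
        by (rule not_sym, rule neqI[of x1], simp, use oldV[OF ab(1)] nx in auto)
      show "(a,b) \<in> S\<^sup>+"
      proof (cases "(a,b) = (u2,v2)")
        case True then show ?thesis using path2[OF Sn(3,4)] by simp
      next
        case False then have "(a,b) \<in> S" using A'old[OF ab(1) F1] ne unfolding S_def Rmem by blast
        then show ?thesis by blast
      qed
    qed
    have inx: "\<forall>x\<in>{x1,x2}. \<exists>a\<in>V. (a,x) \<in> S\<^sup>+"
      by (rule two; rule bexI) (rule r_into_trancl, rule Sn(1), rule u1(1), rule r_into_trancl, rule Sn(3), rule u2(1))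
    have outx: "\<forall>x\<in>{x1,x2}. \<exists>b\<in>V. (x,b) \<in> S\<^sup>+"
      by (rule two; rule bexI) (rule path2[OF Sn(2,4)], rule u2(2), rule r_into_trancl, rule Sn(4), rule u2(2))
    have c: "\<forall>u\<in>V'. \<forall>v\<in>V'. u \<noteq> v \<longrightarrow> (u,v) \<in> (restrict_orient A' e)\<^sup>+"
      using strong_transfer[OF old sub inx outx] unfolding S_def V'_def .
    show ?thesis using delI[OF E'new(2) c[unfolded e_def]] .
  qed
  have D3: "{x1,x2} \<in> deletable_set V' E' A'"
  proof -
    define e where "e = {x1,x2}"
    have ns: "{u1,x1} \<noteq> e" "{x1,v1} \<noteq> e" "{u2,x2} \<noteq> e" "{x2,v2} \<noteq> e"
      using neqI[of u1 "{u1,x1}" e] neqI[of v1 "{x1,v1}" e] neqI[of u2 "{u2,x2}" e] neqI[of v2 "{x2,v2}" e] x1u unfolding e_def by simp_all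
    define S where "S = restrict_orient A' e"
    have Sn: "(u1,x1) \<in> S" "(x1,v1) \<in> S" "(u2,x2) \<in> S" "(x2,v2) \<in> S"
      unfolding S_def Rmem using A'new ns by simp_all
    have sub: "A \<subseteq> S\<^sup>+"
    proof clarify
      fix a b assume ab: "(a,b) \<in> A"
      have ne: "{a,b} \<noteq> e" unfolding e_def
        by (rule not_sym, rule neqI[of x1], simp, use oldV[OF ab] nx in auto)
      show "(a,b) \<in> S\<^sup>+"
      proof (cases "(a,b) = (u1,v1)")
        case True then show ?thesis using path2[OF Sn(1,2)] by simp
      next
        case F1: False show ?thesis
        proof (cases "(a,b) = (u2,v2)")
          case True then show ?thesis using path2[OF Sn(3,4)] by simp
        next
          case False then have "(a,b) \<in> S" using A'old[OF ab F1] ne unfolding S_def Rmem by blast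
          then show ?thesis by blast
        qed
      qed
    qed
    have inx: "\<forall>x\<in>{x1,x2}. \<exists>a\<in>V. (a,x) \<in> S\<^sup>+"
      by (rule two; rule bexI) (rule r_into_trancl, rule Sn(1), rule u1(1), rule r_into_trancl, rule Sn(3), rule u2(1))
    have outx: "\<forall>x\<in>{x1,x2}. \<exists>b\<in>V. (x,b) \<in> S\<^sup>+"
      by (rule two; rule bexI) (rule r_into_trancl, rule Sn(2), rule u1(2), rule r_into_trancl, rule Sn(4), rule u2(2))
    have c: "\<forall>u\<in>V'. \<forall>v\<in>V'. u \<noteq> v \<longrightarrow> (u,v) \<in> (restrict_orient A' e)\<^sup>+"
      using strong_transfer[OF oldstrong sub inx outx] unfolding S_def V'_def .
    show ?thesis using delI[OF E'new(3) c[unfolded e_def]] .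
  qed
  have D4: "{u2,x2} \<in> deletable_set V' E' A'"
  proof -
    define e where "e = {u2,x2}"
    have ns: "{u1,x1} \<noteq> e" "{x1,v1} \<noteq> e" "{x1,x2} \<noteq> e" "{x2,v2} \<noteq> e"
      using neqI[of x1 "{u1,x1}" e] neqI[of x1 "{x1,v1}" e] neqI[of x1 "{x1,x2}" e] neqI[of v2 "{x2,v2}" e] x1u nx d2 unfolding e_def by simp_all
    define S where "S = restrict_orient A' e"
    have Sn: "(u1,x1) \<in> S" "(x1,v1) \<in> S" "(x1,x2) \<in> S" "(x2,v2) \<in> S"
      unfolding S_def Rmem using A'new ns by simp_all
    have old: "\<forall>u\<in>V. \<forall>v\<in>V. u \<noteq> v \<longrightarrow> (u,v) \<in> (restrict_orient A {u2,v2})\<^sup>+"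
      using del2 unfolding deletable_def strong_orientation_def by blast
    have sub: "restrict_orient A {u2,v2} \<subseteq> S\<^sup>+"
    proof clarify
      fix a b assume "(a,b) \<in> restrict_orient A {u2,v2}"
      then have ab: "(a,b) \<in> A" "{a,b} \<noteq> {u2,v2}" unfolding restrict_orient_def by auto
      have F2: "(a,b) \<noteq> (u2,v2)" using ab by auto
      have ne: "{a,b} \<noteq> e" unfolding e_def
        by (rule not_sym, rule neqI[of x2], simp, use oldV[OF ab(1)] nx in auto)
      show "(a,b) \<in> S\<^sup>+"
      proof (cases "(a,b) = (u1,v1)")
        case True then show ?thesis using path2[OF Sn(1,2)] by simp
      next
        case False then have "(a,b) \<in> S" using A'old[OF ab(1) False F2] ne unfolding S_def Rmem by blast
        then show ?thesis by blast
      qed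
    qed
    have inx: "\<forall>x\<in>{x1,x2}. \<exists>a\<in>V. (a,x) \<in> S\<^sup>+"
      by (rule two; rule bexI) (rule r_into_trancl, rule Sn(1), rule u1(1), rule path2[OF Sn(1,3)], rule u1(1))
    have outx: "\<forall>x\<in>{x1,x2}. \<exists>b\<in>V. (x,b) \<in> S\<^sup>+"
      by (rule two; rule bexI) (rule r_into_trancl, rule Sn(2), rule u1(2), rule r_into_trancl, rule Sn(4), rule u2(2))
    have c: "\<forall>u\<in>V'. \<forall>v\<in>V'. u \<noteq> v \<longrightarrow> (u,v) \<in> (restrict_orient A' e)\<^sup>+"
      using strong_transfer[OF old sub inx outx] unfolding S_def V'_def .
    show ?thesis using delI[OF E'new(4) c[unfolded e_def]] .
  qed
  have "(deletable_set V E A - {{u1, v1}, {u2, v2}}) \<union> {{x1, v1}, {x1, x2}, {u2, x2}} \<subseteq> deletable_set V' E' A'"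
  proof
    fix e assume "e \<in> (deletable_set V E A - {{u1, v1}, {u2, v2}}) \<union> {{x1, v1}, {x1, x2}, {u2, x2}}"
    then show "e \<in> deletable_set V' E' A'"
    proof (rule UnE)
      assume "e \<in> {{x1, v1}, {x1, x2}, {u2, x2}}"
      then have "e = {x1,v1} \<or> e = {x1,x2} \<or> e = {u2,x2}" by simp
      then show ?thesis using D2 D3 D4 by auto
    qed (rule D1)
  qed
  from conjI[OF P1 this] show ?thesis unfolding V'_def E'_def A'_def .
qed
end
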